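(* Let $\ket{\phi}=w_0\ket{000}+w_1\ket{001}+w_2\ket{010}+w_3\ket{011}+w_4\ket{100}+w_5\ket{101}+w_6\ket{110}+w_7\ket{111}$ be a real 3-qubit state, i.e. $w_0,\dots,w_7\in\mathbb{R}$ with $\sum_i w_i^2=1$. Then there is a quantum circuit consisting of real local gates and at most four controlled-$Z$ gates that maps $\ket{\phi}$ to $\ket{000}$ (equivalently, whose inverse prepares $\ket{\phi}$ from $\ket{000}$). Moreover, if $$\Delta(\ket{\phi})=(w_0 w_7-w_1 w_6-w_2 w_5+w_3 w_4)^2-4 (w_1 w_2-w_0 w_3) (w_5 w_6-w_4 w_7)\ge 0,$$ then such a circuit exists using real local gates and at most three controlled-$Z$ gates.
   Context: A real local gate on three qubits is an operator $U_2\otimes U_1\otimes U_0$ where each $U_i$ is a $2\times 2$ real orthogonal matrix acting on one qubit. The two-qubit controlled-$Z$ gate is $cz=\mathrm{diag}(1,1,1,-1)$ in the basis $\ket{00},\ket{01},\ket{10},\ket{11}$; on three qubits (labelled $0,1,2$ from right to left, so in $\ket{q_2q_1q_0}$ qubit $0$ is the rightmost), $cz_{ij}$ denotes the controlled-$Z$ gate acting on qubits $i$ and $j$, i.e. it multiplies a basis state $\ket{q_2q_1q_0}$ by $-1$ exactly when $q_i=q_j=1$ and fixes it otherwise. A circuit is a finite composition of such gates. *)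

theory Defs
  imports "HOL-Analysis.Analysis"
begin

text \<open>Three-qubit real states are functions nat \<Rightarrow> real; the amplitude of the basis
 state |q2 q1 q0> is stored at index 4*q2 + 2*q1 + q0 (indices 0..7; values at
 indices \<ge> 8 are irrelevant).\<close>

definition qbit :: "nat \<Rightarrow> nat \<Rightarrow> nat" where
  "qbit q k = (k div 2 ^ q) mod 2"

definition bidx :: "nat \<Rightarrow> 2" where
  "bidx b = (if b = 0 then 0 else 1)"

definition ent :: "real^2^2 \<Rightarrow> nat \<Rightarrow> nat \<Rightarrow> real" where
  "ent U a b = U $ bidx a $ bidx b"

datatype gate = Local "real^2^2" "real^2^2" "real^2^2" | CZ nat nat

definition ket000 :: "nat \<Rightarrow> real" where
  "ket000 k = (if k = 0 then 1 else 0)"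

fun apply_gate :: "gate \<Rightarrow> (nat \<Rightarrow> real) \<Rightarrow> (nat \<Rightarrow> real)" where
  "apply_gate (Local U2 U1 U0) \<psi> = (\<lambda>i. if i < 8 then
       (\<Sum>j<8. ent U2 (qbit 2 i) (qbit 2 j) * ent U1 (qbit 1 i) (qbit 1 j)
               * ent U0 (qbit 0 i) (qbit 0 j) * \<psi> j) else 0)"
| "apply_gate (CZ a b) \<psi> = (\<lambda>i. if i < 8 then
       (if qbit a i = 1 \<and> qbit b i = 1 then - \<psi> i else \<psi> i) else 0)"

fun valid_gate :: "gate \<Rightarrow> bool" where
  "valid_gate (Local U2 U1 U0) \<longleftrightarrow>
     orthogonal_matrix U2 \<and> orthogonal_matrix U1 \<and> orthogonal_matrix U0"
| "valid_gate (CZ a b) \<longleftrightarrow> a < 3 \<and> b < 3 \<and> a \<noteq> b"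

fun is_cz :: "gate \<Rightarrow> bool" where
  "is_cz (CZ _ _) = True"
| "is_cz (Local _ _ _) = False"

text \<open>A circuit is a list of gates, applied left to right (head first).\<close>
definition run_circuit :: "gate list \<Rightarrow> (nat \<Rightarrow> real) \<Rightarrow> (nat \<Rightarrow> real)" where
  "run_circuit c \<psi> = fold apply_gate c \<psi>"

definition num_cz :: "gate list \<Rightarrow> nat" where
  "num_cz c = length (filter is_cz c)"

definition maps_to_000 :: "gate list \<Rightarrow> (nat \<Rightarrow> real) \<Rightarrow> bool" where
  "maps_to_000 c \<psi> \<longleftrightarrow> (\<forall>i<8. run_circuit c \<psi> i = ket000 i)"

definition Delta :: "(nat \<Rightarrow> real) \<Rightarrow> real" where
  "Delta w = (w 0 * w 7 - w 1 * w 6 - w 2 * w 5 + w 3 * w 4)^2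
             - 4 * (w 1 * w 2 - w 0 * w 3) * (w 5 * w 6 - w 4 * w 7)"

end

theory Submission imports Defs begin

definition rotm :: "real \<Rightarrow> real \<Rightarrow> real^2^2" where
  "rotm c s = (\<chi> i j. if i = 0 then (if j = 0 then c else s) else (if j = 0 then -s else c))"

lemma ent_rotm_gen: "ent (rotm c s) a b = (if a = 0 then (if b = 0 then c else s) else (if b = 0 then -s else c))"
  by (simp add: ent_def rotm_def bidx_def)

lemma orth_rotm: "c^2 + s^2 = 1 \<Longrightarrow> orthogonal_matrix (rotm c s)"
  unfolding orthogonal_matrix_def
  by (simp add: vec_eq_iff forall_2 matrix_matrix_mult_def transpose_def mat_def rotm_def sum_2 power2_eq_square algebra_simps)

definition L0 where "L0 c s = Local (rotm 1 0) (rotm 1 0) (rotm c s)"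
definition L1 where "L1 c s = Local (rotm 1 0) (rotm c s) (rotm 1 0)"
definition L2 where "L2 c s = Local (rotm c s) (rotm 1 0) (rotm 1 0)"

lemma sum8: "(\<Sum>j<(8::nat). f j) = f 0 + f 1 + f 2 + f 3 + f 4 + f 5 + f 6 + (f 7::real)"
  by (simp add: eval_nat_numeral)

lemma app_L0:
  "apply_gate (L0 c s) \<psi> 0 = c * \<psi> 0 + s * \<psi> 1"
  "apply_gate (L0 c s) \<psi> 1 = -s * \<psi> 0 + c * \<psi> 1"
  "apply_gate (L0 c s) \<psi> 2 = c * \<psi> 2 + s * \<psi> 3"
  "apply_gate (L0 c s) \<psi> 3 = -s * \<psi> 2 + c * \<psi> 3"
  "apply_gate (L0 c s) \<psi> 4 = c * \<psi> 4 + s * \<psi> 5"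
  "apply_gate (L0 c s) \<psi> 5 = -s * \<psi> 4 + c * \<psi> 5"
  "apply_gate (L0 c s) \<psi> 6 = c * \<psi> 6 + s * \<psi> 7"
  "apply_gate (L0 c s) \<psi> 7 = -s * \<psi> 6 + c * \<psi> 7"
  by (simp_all add: L0_def sum8 qbit_def ent_rotm_gen)

lemma app_L1:
  "apply_gate (L1 c s) \<psi> 0 = c * \<psi> 0 + s * \<psi> 2"
  "apply_gate (L1 c s) \<psi> 2 = -s * \<psi> 0 + c * \<psi> 2"
  "apply_gate (L1 c s) \<psi> 1 = c * \<psi> 1 + s * \<psi> 3"
  "apply_gate (L1 c s) \<psi> 3 = -s * \<psi> 1 + c * \<psi> 3"
  "apply_gate (L1 c s) \<psi> 4 = c * \<psi> 4 + s * \<psi> 6"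
  "apply_gate (L1 c s) \<psi> 6 = -s * \<psi> 4 + c * \<psi> 6"
  "apply_gate (L1 c s) \<psi> 5 = c * \<psi> 5 + s * \<psi> 7"
  "apply_gate (L1 c s) \<psi> 7 = -s * \<psi> 5 + c * \<psi> 7"
  by (simp_all add: L1_def sum8 qbit_def ent_rotm_gen)

lemma app_L2:
  "apply_gate (L2 c s) \<psi> 0 = c * \<psi> 0 + s * \<psi> 4"
  "apply_gate (L2 c s) \<psi> 4 = -s * \<psi> 0 + c * \<psi> 4"
  "apply_gate (L2 c s) \<psi> 1 = c * \<psi> 1 + s * \<psi> 5"
  "apply_gate (L2 c s) \<psi> 5 = -s * \<psi> 1 + c * \<psi> 5"
  "apply_gate (L2 c s) \<psi> 2 = c * \<psi> 2 + s * \<psi> 6"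
  "apply_gate (L2 c s) \<psi> 6 = -s * \<psi> 2 + c * \<psi> 6"
  "apply_gate (L2 c s) \<psi> 3 = c * \<psi> 3 + s * \<psi> 7"
  "apply_gate (L2 c s) \<psi> 7 = -s * \<psi> 3 + c * \<psi> 7"
  by (simp_all add: L2_def sum8 qbit_def ent_rotm_gen)

lemma app_CZ20:
  "apply_gate (CZ 2 0) \<psi> 0 = \<psi> 0" "apply_gate (CZ 2 0) \<psi> 1 = \<psi> 1"
  "apply_gate (CZ 2 0) \<psi> 2 = \<psi> 2" "apply_gate (CZ 2 0) \<psi> 3 = \<psi> 3"
  "apply_gate (CZ 2 0) \<psi> 4 = \<psi> 4" "apply_gate (CZ 2 0) \<psi> 5 = - \<psi> 5"
  "apply_gate (CZ 2 0) \<psi> 6 = \<psi> 6" "apply_gate (CZ 2 0) \<psi> 7 = - \<psi> 7"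
  by (simp_all add: qbit_def)

lemma app_CZ10:
  "apply_gate (CZ 1 0) \<psi> 0 = \<psi> 0" "apply_gate (CZ 1 0) \<psi> 1 = \<psi> 1"
  "apply_gate (CZ 1 0) \<psi> 2 = \<psi> 2" "apply_gate (CZ 1 0) \<psi> 3 = - \<psi> 3"
  "apply_gate (CZ 1 0) \<psi> 4 = \<psi> 4" "apply_gate (CZ 1 0) \<psi> 5 = \<psi> 5"
  "apply_gate (CZ 1 0) \<psi> 6 = \<psi> 6" "apply_gate (CZ 1 0) \<psi> 7 = - \<psi> 7"
  by (simp_all add: qbit_def)

lemma app_CZ21:
  "apply_gate (CZ 2 1) \<psi> 0 = \<psi> 0" "apply_gate (CZ 2 1) \<psi> 1 = \<psi> 1"
  "apply_gate (CZ 2 1) \<psi> 2 = \<psi> 2" "apply_gate (CZ 2 1) \<psi> 3 = \<psi> 3"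
  "apply_gate (CZ 2 1) \<psi> 4 = \<psi> 4" "apply_gate (CZ 2 1) \<psi> 5 = \<psi> 5"
  "apply_gate (CZ 2 1) \<psi> 6 = - \<psi> 6" "apply_gate (CZ 2 1) \<psi> 7 = - \<psi> 7"
  by (simp_all add: qbit_def)

declare apply_gate.simps[simp del]

lemmas appS = app_L0 app_L1 app_L2 app_CZ20 app_CZ10 app_CZ21
  app_L0[unfolded One_nat_def] app_L1[unfolded One_nat_def] app_L2[unfolded One_nat_def]
  app_CZ20[unfolded One_nat_def] app_CZ10[unfolded One_nat_def] app_CZ21[unfolded One_nat_def]

definition N :: "(nat \<Rightarrow> real) \<Rightarrow> real" where
  "N \<psi> = (\<Sum>i<8. (\<psi> i)^2)"

lemma N8: "N \<psi> = (\<psi> 0)^2 + (\<psi> 1)^2 + (\<psi> 2)^2 + (\<psi> 3)^2 + (\<psi> 4)^2 + (\<psi> 5)^2 + (\<psi> 6)^2 + (\<psi> 7)^2"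
  unfolding N_def by (rule sum8)

lemma pairn: "(c*x + s*y)^2 + (-s*x + c*y)^2 = (c^2+s^2)*(x^2+(y::real)^2)"
  by algebra

lemma N_L0: assumes "c^2+s^2 = 1" shows "N (apply_gate (L0 c s) \<psi>) = N \<psi>"
  unfolding N8 app_L0 using pairn[of c "\<psi> 0" s "\<psi> 1"] pairn[of c "\<psi> 2" s "\<psi> 3"] pairn[of c "\<psi> 4" s "\<psi> 5"] pairn[of c "\<psi> 6" s "\<psi> 7"] unfolding assms mult_1 by linarith
lemma N_L1: assumes "c^2+s^2 = 1" shows "N (apply_gate (L1 c s) \<psi>) = N \<psi>"
  unfolding N8 app_L1 using pairn[of c "\<psi> 0" s "\<psi> 2"] pairn[of c "\<psi> 1" s "\<psi> 3"] pairn[of c "\<psi> 4" s "\<psi> 6"] pairn[of c "\<psi> 5" s "\<psi> 7"] unfolding assms mult_1 by linarith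
lemma N_L2: assumes "c^2+s^2 = 1" shows "N (apply_gate (L2 c s) \<psi>) = N \<psi>"
  unfolding N8 app_L2 using pairn[of c "\<psi> 0" s "\<psi> 4"] pairn[of c "\<psi> 1" s "\<psi> 5"] pairn[of c "\<psi> 2" s "\<psi> 6"] pairn[of c "\<psi> 3" s "\<psi> 7"] unfolding assms mult_1 by linarith
lemma N_CZ20: "N (apply_gate (CZ 2 0) \<psi>) = N \<psi>" unfolding N8 app_CZ20 by simp
lemma N_CZ10: "N (apply_gate (CZ 1 0) \<psi>) = N \<psi>" unfolding N8 app_CZ10 by simp
lemma N_CZ21: "N (apply_gate (CZ 2 1) \<psi>) = N \<psi>" unfolding N8 app_CZ21 by simp

definition reach :: "nat \<Rightarrow> (nat \<Rightarrow> real) \<Rightarrow> bool" where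
  "reach k \<psi> \<longleftrightarrow> (\<exists>c. (\<forall>g\<in>set c. valid_gate g) \<and> num_cz c \<le> k \<and> maps_to_000 c \<psi>)"

lemma run_cons: "run_circuit (g # c) \<psi> = run_circuit c (apply_gate g \<psi>)"
  by (simp only: run_circuit_def fold_Cons comp_def)

lemma reach_local:
  assumes "valid_gate (Local A B C)" "reach k (apply_gate (Local A B C) \<psi>)"
  shows "reach k \<psi>"
proof -
  obtain c where c: "\<forall>g\<in>set c. valid_gate g" "num_cz c \<le> k" "maps_to_000 c (apply_gate (Local A B C) \<psi>)"
    using assms(2) unfolding reach_def by blast
  have "num_cz (Local A B C # c) = num_cz c" by (simp add: num_cz_def)
  moreover have "maps_to_000 (Local A B C # c) \<psi>"
    using c(3) unfolding maps_to_000_def run_cons .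
  moreover have "\<forall>g\<in>set (Local A B C # c). valid_gate g" using c(1) assms(1) by (simp del: valid_gate.simps)
  ultimately have "(\<forall>g\<in>set (Local A B C # c). valid_gate g) \<and> num_cz (Local A B C # c) \<le> k \<and> maps_to_000 (Local A B C # c) \<psi>"
    using c(2) by simp
  then show ?thesis unfolding reach_def by (rule exI)
qed

lemma reach_cz:
  assumes "a < 3" "b < 3" "a \<noteq> b" "reach k (apply_gate (CZ a b) \<psi>)"
  shows "reach (Suc k) \<psi>"
proof -
  obtain c where c: "\<forall>g\<in>set c. valid_gate g" "num_cz c \<le> k" "maps_to_000 c (apply_gate (CZ a b) \<psi>)"
    using assms(4) unfolding reach_def by blast
  have "num_cz (CZ a b # c) = Suc (num_cz c)" by (simp add: num_cz_def)
  moreover have "maps_to_000 (CZ a b # c) \<psi>"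
    using c(3) unfolding maps_to_000_def run_cons .
  moreover have "\<forall>g\<in>set (CZ a b # c). valid_gate g" using c(1) assms(1-3) by simp
  ultimately have "(\<forall>g\<in>set (CZ a b # c). valid_gate g) \<and> num_cz (CZ a b # c) \<le> Suc k \<and> maps_to_000 (CZ a b # c) \<psi>"
    using c(2) by simp
  then show ?thesis unfolding reach_def by (rule exI)
qed

lemma reach_mono: assumes "reach k \<psi>" "k \<le> k'" shows "reach k' \<psi>"
proof -
  obtain c where c: "\<forall>g\<in>set c. valid_gate g" "num_cz c \<le> k" "maps_to_000 c \<psi>"
    using assms(1) unfolding reach_def by blast
  have "num_cz c \<le> k'" using c(2) assms(2) by linarith
  then show ?thesis unfolding reach_def using c(1,3) by blast
qed

lemma all8: "(\<forall>i<8. P i) \<longleftrightarrow> P 0 \<and> P 1 \<and> P 2 \<and> P 3 \<and> P 4 \<and> P 5 \<and> P 6 \<and> P (7::nat)"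
  apply (rule iffI)
  apply simp
  apply clarify
  apply (case_tac "i = 0 \<or> i = 1 \<or> i = 2 \<or> i = 3 \<or> i = 4 \<or> i = 5 \<or> i = 6 \<or> i = 7")
  apply (elim disjE; simp)
  apply linarith
  done

lemma reach0:
  assumes "\<psi> 0 = 1" "\<psi> 1 = 0" "\<psi> 2 = 0" "\<psi> 3 = 0" "\<psi> 4 = 0" "\<psi> 5 = 0" "\<psi> 6 = 0" "\<psi> 7 = 0"
  shows "reach k \<psi>"
proof -
  have r: "run_circuit [] \<psi> = \<psi>" by (simp add: run_circuit_def)
  have "maps_to_000 [] \<psi>" unfolding maps_to_000_def r all8 ket000_def using assms by simp
  moreover have "num_cz [] \<le> k" by (simp add: num_cz_def)
  ultimately have "(\<forall>g\<in>set []. valid_gate g) \<and> num_cz [] \<le> k \<and> maps_to_000 [] \<psi>" by simp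
  then show ?thesis unfolding reach_def by (rule exI)
qed

lemma reach_L0: assumes "c^2+s^2 = 1" "reach k (apply_gate (L0 c s) \<psi>)" shows "reach k \<psi>"
  by (rule reach_local[OF _ assms(2)[unfolded L0_def]]) (simp add: orth_rotm assms(1))
lemma reach_L1: assumes "c^2+s^2 = 1" "reach k (apply_gate (L1 c s) \<psi>)" shows "reach k \<psi>"
  by (rule reach_local[OF _ assms(2)[unfolded L1_def]]) (simp add: orth_rotm assms(1))
lemma reach_L2: assumes "c^2+s^2 = 1" "reach k (apply_gate (L2 c s) \<psi>)" shows "reach k \<psi>"
  by (rule reach_local[OF _ assms(2)[unfolded L2_def]]) (simp add: orth_rotm assms(1))

lemma t1: "(m::real) \<noteq> 0 \<Longrightarrow> (p/m)*((q/m)*x - (p/m)*y) + (q/m)*((p/m)*x + (q/m)*y) = (p*(q*x - p*y) + q*(p*x + q*y))/m^2"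
  by (simp add: field_simps power2_eq_square)
lemma t2: "(m::real) \<noteq> 0 \<Longrightarrow> a*(x/m)^2 + b*(x/m)*(1/m) + dd*(1/m)^2 = (a*x^2 + b*x + dd)/m^2"
  by (simp add: field_simps power2_eq_square)
lemma t3: "(n::real) > 0 \<Longrightarrow> n^2 = x^2+y^2 \<Longrightarrow> x/n*x + y/n*y = n"
proof -
  assume a: "n > 0" "n^2 = x^2+y^2"
  have "x/n*x + y/n*y = (x^2+y^2)/n" by (simp add: power2_eq_square add_divide_distrib)
  also have "\<dots> = n" unfolding a(2)[symmetric] using a(1) by (simp add: power2_eq_square)
  finally show ?thesis .
qed
lemma t4: "- (y/n)*x + x/n*(y::real) = 0"
  by (simp add: algebra_simps)

lemma kill: "\<exists>c s. c^2+s^2 = 1 \<and> c*x + s*y = sqrt(x^2+y^2) \<and> -s*x + c*y = (0::real)"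
proof (cases "x^2+y^2 = 0")
  case True
  then have "x = 0" "y = 0" by (simp_all add: sum_power2_eq_zero_iff)
  then have "1^2+0^2 = (1::real) \<and> 1*x + 0*y = sqrt(x^2+y^2) \<and> -0*x + 1*y = (0::real)" by simp
  then show ?thesis by blast
next
  case False
  define n where "n = sqrt(x^2+y^2)"
  have n2: "n^2 = x^2+y^2" unfolding n_def by simp
  have "x^2+y^2 > 0" using False by (metis add_nonneg_nonneg zero_le_power2 less_eq_real_def)
  then have np: "n > 0" unfolding n_def by simp
  show ?thesis
  proof (rule exI[of _ "x/n"], rule exI[of _ "y/n"], intro conjI)
    have "(x/n)^2 + (y/n)^2 = (x^2+y^2)/n^2" by (metis add_divide_distrib power_divide)
    also have "\<dots> = 1" unfolding n2[symmetric] using np by simp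
    finally show "(x/n)^2 + (y/n)^2 = 1" .
    show "x/n*x + y/n*y = sqrt(x^2+y^2)" using t3[OF np n2] unfolding n_def[symmetric] .
    show "- (y/n)*x + x/n*y = 0" by (rule t4)
  qed
qed

lemma kill2:
  assumes "x0*y1 - y0*x1 = (0::real)"
  shows "\<exists>c s. c^2+s^2 = 1 \<and> -s*x0 + c*y0 = 0 \<and> -s*x1 + c*y1 = 0"
proof (cases "x0 = 0 \<and> y0 = 0")
  case True
  obtain c s where "c^2+s^2 = 1" "-s*x1 + c*y1 = 0" using kill by blast
  then show ?thesis using True by auto
next
  case False
  obtain c s where cs: "c^2+s^2 = 1" "c*x0 + s*y0 = sqrt(x0^2+y0^2)" "-s*x0 + c*y0 = 0" using kill by blast
  have "sqrt(x0^2+y0^2) \<noteq> 0" using False by (simp add: sum_power2_eq_zero_iff)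
  moreover have "sqrt(x0^2+y0^2) * (-s*x1 + c*y1) = 0"
  proof -
    have "(c*x0 + s*y0)*(-s*x1 + c*y1) - (-s*x0 + c*y0)*(c*x1 + s*y1) = (c^2+s^2)*(x0*y1 - y0*x1)"
      by algebra
    then show ?thesis using cs assms by simp
  qed
  ultimately show ?thesis using cs by auto
qed

lemma half: "\<exists>c s. c^2+s^2 = 1 \<and> c*(s*x - c*y) + s*(c*x + s*y) = (0::real)"
proof -
  define n where "n = sqrt(x^2+y^2)"
  have n2: "n^2 = x^2+y^2" unfolding n_def by simp
  show ?thesis
  proof (cases "x + n = 0 \<and> y = 0")
    case True
    show ?thesis apply (rule exI[of _ 0], rule exI[of _ 1]) using True by simp
  next
    case False
    define m where "m = sqrt((x+n)^2+y^2)"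
    have m2: "m^2 = (x+n)^2+y^2" unfolding m_def by simp
    have "(x+n)^2+y^2 > 0" using False by (simp add: sum_power2_gt_zero_iff)
    then have mp: "m > 0" unfolding m_def by simp
    show ?thesis
    proof (rule exI[of _ "(x+n)/m"], rule exI[of _ "y/m"], intro conjI)
      have "((x+n)/m)^2 + (y/m)^2 = ((x+n)^2+y^2)/m^2" by (metis add_divide_distrib power_divide)
      also have "\<dots> = 1" unfolding m2[symmetric] using mp by simp
      finally show "((x+n)/m)^2 + (y/m)^2 = 1" .
      have "(x+n)*(y*x - (x+n)*y) + y*((x+n)*x + y*y) = y*(x^2+y^2 - n^2)"
        by (simp add: algebra_simps power2_eq_square)
      also have "\<dots> = 0" using n2 by simp
      finally have e: "(x+n)*(y*x - (x+n)*y) + y*((x+n)*x + y*y) = 0" .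
      have "(x+n)/m*(y/m*x - (x+n)/m*y) + y/m*((x+n)/m*x + y/m*y)
          = ((x+n)*(y*x - (x+n)*y) + y*((x+n)*x + y*y)) / m^2"
        using mp t1[of m "x+n" y x y] by simp
      then show "(x+n)/m*(y/m*x - (x+n)/m*y) + y/m*((x+n)/m*x + y/m*y) = 0" using e by simp
    qed
  qed
qed

lemma quad:
  assumes "b^2 - 4*a*dd \<ge> (0::real)"
  shows "\<exists>c s. c^2+s^2 = 1 \<and> a*c^2 + b*c * s + dd* s^2 = 0"
proof (cases "a = 0")
  case True
  show ?thesis apply (rule exI[of _ 1], rule exI[of _ 0]) using True by simp
next
  case False
  define x where "x = (-b + sqrt(b^2 - 4*a*dd))/(2*a)"
  have sq: "(sqrt(b^2 - 4*a*dd))^2 = b^2 - 4*a*dd" using assms by simp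
  have root: "a*x^2 + b*x + dd = 0"
  proof -
    have "4*a*(a*x^2 + b*x + dd) = (2*a*x + b)^2 - (b^2 - 4*a*dd)"
      by (simp add: algebra_simps power2_eq_square)
    also have "2*a*x + b = sqrt(b^2 - 4*a*dd)" unfolding x_def using False by simp
    finally have "4*a*(a*x^2 + b*x + dd) = 0" using sq by simp
    then show ?thesis using False by simp
  qed
  define m where "m = sqrt(x^2+1)"
  have m2: "m^2 = x^2+1" unfolding m_def by simp
  have mp: "m > 0" unfolding m_def by (simp add: add_nonneg_pos)
  show ?thesis
  proof (rule exI[of _ "x/m"], rule exI[of _ "1/m"], intro conjI)
    have "(x/m)^2 + (1/m)^2 = (x^2+1)/m^2" by (metis add_divide_distrib power_divide power_one)
    also have "\<dots> = 1" unfolding m2[symmetric] using mp by simp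
    finally show "(x/m)^2 + (1/m)^2 = 1" .
    have "a*(x/m)^2 + b*(x/m)*(1/m) + dd*(1/m)^2 = (a*x^2 + b*x + dd)/m^2"
      using mp t2[of m a x b dd] by simp
    then show "a*(x/m)^2 + b*(x/m)*(1/m) + dd*(1/m)^2 = 0" using root by simp
  qed
qed


lemma step_final:
  assumes "N \<psi> = 1" "\<psi> 1 = 0" "\<psi> 2 = 0" "\<psi> 3 = 0" "\<psi> 5 = 0" "\<psi> 6 = 0" "\<psi> 7 = 0"
  shows "reach k \<psi>"
proof -
  obtain c s where cs: "c^2+s^2 = 1" "c*\<psi> 0 + s*\<psi> 4 = sqrt((\<psi> 0)^2+(\<psi> 4)^2)" "-s*\<psi> 0 + c*\<psi> 4 = 0"
    using kill by blast
  have "(\<psi> 0)^2 + (\<psi> 4)^2 = 1" using assms unfolding N8 by simp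
  then have e: "c*\<psi> 0 + s*\<psi> 4 = 1" using cs(2) by simp
  have e2: "c*\<psi> 4 = s*\<psi> 0" using cs(3) by simp
  have "reach k (apply_gate (L2 c s) \<psi>)"
    by (rule reach0) (simp_all add: appS assms assms[unfolded One_nat_def] e2 e)
  then show ?thesis by (rule reach_L2[OF cs(1)])
qed

lemma step_q1:
  assumes "N \<psi> = 1" "\<psi> 1 = 0" "\<psi> 3 = 0" "\<psi> 5 = 0" "\<psi> 7 = 0"
  shows "reach 1 \<psi>"
proof -
  obtain c s where cs: "c^2+s^2 = 1" "-s*\<psi> 0 + c*\<psi> 2 = 0"
    using kill by blast
  define p1 where "p1 = apply_gate (L1 c s) \<psi>"
  have p1: "p1 1 = 0" "p1 2 = 0" "p1 3 = 0" "p1 5 = 0" "p1 7 = 0"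
    unfolding p1_def app_L1 using assms cs by simp_all
  have Np1: "N p1 = 1" unfolding p1_def N_L1[OF cs(1)] by (rule assms(1))
  obtain c' s' where h: "c'^2+s'^2 = 1" "c'*(s'*p1 4 - c'*p1 6) + s'*(c'*p1 4 + s'*p1 6) = 0"
    using half by blast
  define p2 where "p2 = apply_gate (L1 c' s') p1"
  define p3 where "p3 = apply_gate (CZ 2 1) p2"
  define p4 where "p4 = apply_gate (L1 c' (-s')) p3"
  have "N p2 = 1" unfolding p2_def N_L1[OF h(1)] by (rule Np1)
  then have "N p3 = 1" unfolding p3_def N_CZ21 .
  then have Np4: "N p4 = 1" unfolding p4_def using N_L1[of c' "-s'" p3] h(1) by simp
  have "p4 6 = c'*(s'*p1 4 - c'*p1 6) + s'*(c'*p1 4 + s'*p1 6)"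
    by (simp add: p4_def p3_def p2_def appS algebra_simps)
  then have q6: "p4 6 = 0" using h(2) by simp
  have q2: "p4 2 = 0" using p1 by (simp add: p4_def p3_def p2_def appS algebra_simps)
  have q: "p4 1 = 0" "p4 3 = 0" "p4 5 = 0" "p4 7 = 0"
    using p1 p1[unfolded One_nat_def] by (simp_all add: p4_def p3_def p2_def appS algebra_simps)
  have "reach 0 p4" by (rule step_final) (fact Np4 q q2 q6)+
  then have "reach 0 p3" unfolding p4_def by (rule reach_L1[rotated]) (simp add: h(1))
  then have "reach 1 p2" unfolding p3_def using reach_cz[of 2 1 0 p2] by simp
  then have "reach 1 p1" unfolding p2_def by (rule reach_L1[rotated]) (simp add: h(1))
  then show "reach 1 \<psi>" unfolding p1_def by (rule reach_L1[rotated]) (simp add: cs(1))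
qed


lemma step3:
  assumes "N \<psi> = 1" "Delta \<psi> \<ge> 0"
  shows "reach 3 \<psi>"
proof -
  define a where "a = \<psi> 0 * \<psi> 3 - \<psi> 1 * \<psi> 2"
  define b where "b = \<psi> 0 * \<psi> 7 + \<psi> 4 * \<psi> 3 - \<psi> 1 * \<psi> 6 - \<psi> 5 * \<psi> 2"
  define dd where "dd = \<psi> 4 * \<psi> 7 - \<psi> 5 * \<psi> 6"
  have "b^2 - 4*a*dd = Delta \<psi>" unfolding a_def b_def dd_def Delta_def by algebra
  then obtain c s where cs: "c^2+s^2 = 1" "a*c^2 + b*c * s + dd* s^2 = 0"
    using quad[of b a dd] assms(2) by auto
  define p1 where "p1 = apply_gate (L2 c s) \<psi>"
  have "p1 0 * p1 3 - p1 1 * p1 2 = a*c^2 + b*c * s + dd* s^2"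
    unfolding p1_def appS a_def b_def dd_def by algebra
  then have det: "p1 0 * p1 3 - p1 1 * p1 2 = 0" using cs(2) by simp
  have N1: "N p1 = 1" unfolding p1_def N_L2[OF cs(1)] by (rule assms(1))
  obtain c2 s2 where cs2: "c2^2+s2^2 = 1" "-s2*p1 0 + c2*p1 1 = 0" "-s2*p1 2 + c2*p1 3 = 0"
    using kill2[OF det] by blast
  define p2 where "p2 = apply_gate (L0 c2 s2) p1"
  have N2: "N p2 = 1" unfolding p2_def N_L0[OF cs2(1)] by (rule N1)
  have p2: "p2 1 = 0" "p2 3 = 0" unfolding p2_def appS using cs2 by simp_all
  obtain c3 s3 where cs3: "c3^2+s3^2 = 1" "-s3*p2 0 + c3*p2 2 = 0"
    using kill by blast
  define p3 where "p3 = apply_gate (L1 c3 s3) p2"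
  have N3: "N p3 = 1" unfolding p3_def N_L1[OF cs3(1)] by (rule N2)
  have p3: "p3 1 = 0" "p3 2 = 0" "p3 3 = 0" unfolding p3_def appS using cs3 p2 by simp_all
  obtain c4 s4 where h4: "c4^2+s4^2 = 1" "c4*(s4*p3 4 - c4*p3 5) + s4*(c4*p3 4 + s4*p3 5) = 0"
    using half by blast
  define p4 where "p4 = apply_gate (L0 c4 s4) p3"
  define p5 where "p5 = apply_gate (CZ 2 0) p4"
  define p6 where "p6 = apply_gate (L0 c4 (-s4)) p5"
  have "N p4 = 1" unfolding p4_def N_L0[OF h4(1)] by (rule N3)
  then have "N p5 = 1" unfolding p5_def N_CZ20 .
  then have N6: "N p6 = 1" unfolding p6_def using N_L0[of c4 "-s4" p5] h4(1) by simp
  have "p6 5 = c4*(s4*p3 4 - c4*p3 5) + s4*(c4*p3 4 + s4*p3 5)"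
    unfolding p6_def p5_def p4_def appS by algebra
  then have q65: "p6 5 = 0" using h4(2) by simp
  have "p6 1 = (c4^2+s4^2) * p3 1" "p6 2 = (c4^2+s4^2) * p3 2" "p6 3 = (c4^2+s4^2) * p3 3"
    unfolding p6_def p5_def p4_def appS by algebra+
  then have q6: "p6 1 = 0" "p6 2 = 0" "p6 3 = 0" using p3 by simp_all
  obtain c5 s5 where h5: "c5^2+s5^2 = 1" "c5*(s5*p6 6 - c5*p6 7) + s5*(c5*p6 6 + s5*p6 7) = 0"
    using half by blast
  define p7 where "p7 = apply_gate (L0 c5 s5) p6"
  define p8 where "p8 = apply_gate (CZ 1 0) p7"
  define p9 where "p9 = apply_gate (L0 c5 (-s5)) p8"
  have "N p7 = 1" unfolding p7_def N_L0[OF h5(1)] by (rule N6)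
  then have "N p8 = 1" unfolding p8_def N_CZ10 .
  then have N9: "N p9 = 1" unfolding p9_def using N_L0[of c5 "-s5" p8] h5(1) by simp
  have "p9 7 = c5*(s5*p6 6 - c5*p6 7) + s5*(c5*p6 6 + s5*p6 7)"
    unfolding p9_def p8_def p7_def appS by algebra
  then have q97: "p9 7 = 0" using h5(2) by simp
  have "p9 1 = (c5^2+s5^2) * p6 1" "p9 3 = s5*(c5*p6 2 + s5*p6 3) - c5*(-s5*p6 2 + c5*p6 3)"
       "p9 5 = (c5^2+s5^2) * p6 5"
    unfolding p9_def p8_def p7_def appS by algebra+
  then have q9: "p9 1 = 0" "p9 3 = 0" "p9 5 = 0" using q6 q65 by simp_all
  have "reach 1 p9" by (rule step_q1) (fact N9 q9 q97)+
  then have "reach 1 p8" unfolding p9_def by (rule reach_L0[rotated]) (simp add: h5(1))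
  then have "reach 2 p7" unfolding p8_def using reach_cz[of 1 0 1 p7] by (simp add: numeral_2_eq_2)
  then have "reach 2 p6" unfolding p7_def by (rule reach_L0[rotated]) (simp add: h5(1))
  then have "reach 2 p5" unfolding p6_def by (rule reach_L0[rotated]) (simp add: h4(1))
  then have "reach 3 p4" unfolding p5_def using reach_cz[of 2 0 2 p4] by simp
  then have "reach 3 p3" unfolding p4_def by (rule reach_L0[rotated]) (simp add: h4(1))
  then have "reach 3 p2" unfolding p3_def by (rule reach_L1[rotated]) (simp add: cs3(1))
  then have "reach 3 p1" unfolding p2_def by (rule reach_L0[rotated]) (simp add: cs2(1))
  then show "reach 3 \<psi>" unfolding p1_def by (rule reach_L2[rotated]) (simp add: cs(1))
qed

theorem mainTheorem1:
  fixes w :: "nat \<Rightarrow> real"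
  assumes "(\<Sum>i<8. (w i)^2) = 1"
  shows "(\<exists>c. (\<forall>g\<in>set c. valid_gate g) \<and> num_cz c \<le> 4 \<and> maps_to_000 c w)
       \<and> (Delta w \<ge> 0 \<longrightarrow>
            (\<exists>c. (\<forall>g\<in>set c. valid_gate g) \<and> num_cz c \<le> 3 \<and> maps_to_000 c w))"
proof -
  have Nw: "N w = 1" unfolding N_def by (rule assms)
  have part2: "Delta w \<ge> 0 \<longrightarrow> reach 3 w" using step3[OF Nw] by blast
  have part1: "reach 4 w"
  proof (cases "Delta w \<ge> 0")
    case True
    then show ?thesis using part2 reach_mono by fastforce
  next
    case False
    define w' where "w' = apply_gate (CZ 2 0) w"
    have Nw': "N w' = 1" unfolding w'_def N_CZ20 by (rule Nw)
    define X where "X = (w 1 * w 2 - w 0 * w 3) * (w 5 * w 6 - w 4 * w 7)"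
    define b where "b = w 0 * w 7 - w 1 * w 6 - w 2 * w 5 + w 3 * w 4"
    define b' where "b' = - w 0 * w 7 - w 1 * w 6 + w 2 * w 5 + w 3 * w 4"
    have d1: "Delta w = b^2 - 4 * X" unfolding Delta_def b_def X_def by algebra
    have d2: "Delta w' = b'^2 + 4 * X" unfolding Delta_def b'_def X_def w'_def appS by algebra
    have "b^2 \<ge> 0" "b'^2 \<ge> 0" by simp_all
    then have "Delta w' \<ge> 0" using d1 d2 False by linarith
    then have "reach 3 w'" by (rule step3[OF Nw'])
    then show ?thesis unfolding w'_def using reach_cz[of 2 0 3 w] by simp
  qed
  show ?thesis using part1 part2 unfolding reach_def by blast
qed

end
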